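(* Let $M\subseteq V$ and let $SB$ be any satellite bridge for $M$. Then there exist a tree $R$ in $G$ with $M\subseteq N(R)$ and a function $F$ defined on $d^+(R)$ with values in $2^{\{1,\dots,K\}}$ such that (1) for every $u\in d^+(R)$, $F(u)$ is a hitting set of $\{\Gamma(v): v\in nb_R(u)\}$, and (2) $\sum_{u\in d^+(R)}|F(u)|\le |N(SB)|$.
   Context: Let $G=(V,E)$ be a finite, simple, undirected, connected graph with $|V|\ge 2$. Fix a positive integer $K$ and, for every $u\in V$, a nonempty set $\Gamma(u)\subseteq\{1,\dots,K\}$. Let $nb_G(u)$ be the neighbours of $u$ in $G$. For a tree $T$, $N(T)$ is its vertex set, $nb_T(u)$ the neighbours of $u$ in $T$, and $d^+(T)$ the set of vertices of degree greater than one in $T$. A hitting set of a collection $\mathcal C$ of subsets of a finite set $\mathcal F$ is a subset of $\mathcal F$ meeting every member of $\mathcal C$. The extended graph $\widetilde G=(\widetilde V,\widetilde E)$ of $G$: (i) initially $\widetilde V=V$, $\widetilde E=\emptyset$; (ii) for each $u\in V$ and each $i\in\bigcup_{v\in nb_G(u)}\Gamma(v)$, add a new vertex $\lambda(u,i)$ (satellite node of $u$; $u$ is its nuclear node); $\Psi(u)$ is the set of satellite nodes of $u$; (iii) for each $u\in V$, join every pair of distinct vertices of $\Psi(u)\cup\{u\}$; (iv) for each edge $\{u,v\}\in E$ (in each orientation $(u,v)$), each $i\in\Gamma(v)$, $j\in\Gamma(u)$, add edges $\{\lambda(u,i),\lambda(v,j)\}$, $\{\lambda(u,i),v\}$, $\{u,\lambda(v,j)\}$.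 $V_S=\widetilde V\setminus V$ is the set of satellite nodes. Given $M\subseteq V$, a satellite bridge is a (nonempty) subtree $SB$ of $\widetilde G$ all of whose vertices are satellite nodes and such that every vertex of $M$ is adjacent in $\widetilde G$ to at least one vertex of $SB$. *)

theory Defs
  imports Main
begin

definition simple_graph :: "'v set \<Rightarrow> 'v set set \<Rightarrow> bool" where
  "simple_graph V E \<longleftrightarrow> finite V \<and> (\<forall>e\<in>E. \<exists>u v. e = {u, v} \<and> u \<in> V \<and> v \<in> V \<and> u \<noteq> v)"

definition nb :: "'v set set \<Rightarrow> 'v \<Rightarrow> 'v set" where
  "nb E u = {v. {u, v} \<in> E \<and> v \<noteq> u}"

definition adj_rel :: "'v set set \<Rightarrow> ('v \<times> 'v) set" where
  "adj_rel E = {(a, b). {a, b} \<in> E}"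

definition connected_graph :: "'v set \<Rightarrow> 'v set set \<Rightarrow> bool" where
  "connected_graph V E \<longleftrightarrow> (\<forall>x\<in>V. \<forall>y\<in>V. (x, y) \<in> (adj_rel E \<inter> (V \<times> V))\<^sup>*)"

definition is_cycle :: "'v set set \<Rightarrow> 'v list \<Rightarrow> bool" where
  "is_cycle E xs \<longleftrightarrow> length xs \<ge> 3 \<and> distinct xs \<and>
     (\<forall>i < length xs. {xs ! i, xs ! ((i + 1) mod length xs)} \<in> E)"

definition acyclic_graph :: "'v set set \<Rightarrow> bool" where
  "acyclic_graph E \<longleftrightarrow> (\<nexists>xs. is_cycle E xs)"

definition subtree :: "'v set \<Rightarrow> 'v set set \<Rightarrow> 'v set \<Rightarrow> 'v set set \<Rightarrow> bool" where
  "subtree V E N T \<longleftrightarrow> N \<noteq> {} \<and> N \<subseteq> V \<and> T \<subseteq> E \<and> (\<forall>e\<in>T. e \<subseteq> N)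
     \<and> simple_graph N T \<and> connected_graph N T \<and> acyclic_graph T"

definition dplus :: "'v set \<Rightarrow> 'v set set \<Rightarrow> 'v set" where
  "dplus N T = {u \<in> N. card (nb T u) > 1}"

definition hitting_set :: "'f set \<Rightarrow> 'f set set \<Rightarrow> 'f set \<Rightarrow> bool" where
  "hitting_set Fs C H \<longleftrightarrow> H \<subseteq> Fs \<and> (\<forall>S\<in>C. S \<inter> H \<noteq> {})"

text \<open>Nodes of the extended graph: nuclear nodes and satellite nodes lambda(u,i).\<close>
datatype 'v enode = Nuc 'v | Sat 'v nat

definition sat_labels :: "'v set set \<Rightarrow> ('v \<Rightarrow> nat set) \<Rightarrow> 'v \<Rightarrow> nat set" where
  "sat_labels E \<Gamma> u = (\<Union>v\<in>nb E u. \<Gamma> v)"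

definition Psi :: "'v set set \<Rightarrow> ('v \<Rightarrow> nat set) \<Rightarrow> 'v \<Rightarrow> 'v enode set" where
  "Psi E \<Gamma> u = Sat u ` sat_labels E \<Gamma> u"

definition satellites :: "'v set \<Rightarrow> 'v set set \<Rightarrow> ('v \<Rightarrow> nat set) \<Rightarrow> 'v enode set" where
  "satellites V E \<Gamma> = (\<Union>u\<in>V. Psi E \<Gamma> u)"

definition ext_V :: "'v set \<Rightarrow> 'v set set \<Rightarrow> ('v \<Rightarrow> nat set) \<Rightarrow> 'v enode set" where
  "ext_V V E \<Gamma> = Nuc ` V \<union> satellites V E \<Gamma>"

definition ext_E :: "'v set \<Rightarrow> 'v set set \<Rightarrow> ('v \<Rightarrow> nat set) \<Rightarrow> 'v enode set set" where
  "ext_E V E \<Gamma> =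
     {{x, y} | x y u. u \<in> V \<and> x \<in> insert (Nuc u) (Psi E \<Gamma> u)
                     \<and> y \<in> insert (Nuc u) (Psi E \<Gamma> u) \<and> x \<noteq> y}
   \<union> (\<Union>u\<in>V. \<Union>v\<in>V. if {u, v} \<in> E then
        {{Sat u i, Sat v j} | i j. i \<in> \<Gamma> v \<and> j \<in> \<Gamma> u}
      \<union> {{Sat u i, Nuc v} | i. i \<in> \<Gamma> v}
      \<union> {{Nuc u, Sat v j} | j. j \<in> \<Gamma> u}
     else {})"

definition satellite_bridge ::
  "'v set \<Rightarrow> 'v set set \<Rightarrow> ('v \<Rightarrow> nat set) \<Rightarrow> 'v set \<Rightarrow> 'v enode set \<Rightarrow> 'v enode set set \<Rightarrow> bool" where
  "satellite_bridge V E \<Gamma> M NS TS \<longleftrightarrow>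
     subtree (ext_V V E \<Gamma>) (ext_E V E \<Gamma>) NS TS \<and> NS \<subseteq> satellites V E \<Gamma>
     \<and> (\<forall>m\<in>M. \<exists>s\<in>NS. {Nuc m, s} \<in> ext_E V E \<Gamma>)"

end

theory Submission
  imports Defs
begin


lemma adj_sym: "sym (adj_rel T \<inter> W \<times> W)"
  unfolding adj_rel_def sym_def by (auto simp: insert_commute)

lemma rt_sym: "(a,b) \<in> (adj_rel T \<inter> W \<times> W)\<^sup>* \<Longrightarrow> (b,a) \<in> (adj_rel T \<inter> W \<times> W)\<^sup>*"
proof -
  assume a: "(a,b) \<in> (adj_rel T \<inter> W \<times> W)\<^sup>*"
  have "sym ((adj_rel T \<inter> W \<times> W)\<^sup>*)" by (rule sym_rtrancl[OF adj_sym])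
  thus ?thesis using a unfolding sym_def by blast
qed

lemma conn_transfer:
  assumes "\<And>a b. {a,b} \<in> T \<Longrightarrow> a \<in> W \<Longrightarrow> b \<in> W \<Longrightarrow> (a,b) \<in> (adj_rel T' \<inter> W\<times>W)\<^sup>*"
    and "connected_graph W T"
  shows "connected_graph W T'"
proof -
  have "adj_rel T \<inter> W\<times>W \<subseteq> (adj_rel T' \<inter> W\<times>W)\<^sup>*"
    using assms(1) by (auto simp: adj_rel_def)
  hence "(adj_rel T \<inter> W\<times>W)\<^sup>* \<subseteq> (adj_rel T' \<inter> W\<times>W)\<^sup>*"
    by (rule rtrancl_subset_rtrancl)
  thus ?thesis using assms(2) unfolding connected_graph_def by blast
qed

lemma cycle_path:
  assumes cyc: "is_cycle T xs" and TW: "\<forall>e\<in>T. e \<subseteq> W"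
  shows "(xs!1, xs!0) \<in> (adj_rel (T - {{xs!0, xs!1}}) \<inter> W\<times>W)\<^sup>*"
proof -
  define n where "n = length xs"
  define R where "R = adj_rel (T - {{xs!0, xs!1}}) \<inter> W\<times>W"
  have n3: "n \<ge> 3" and dist: "distinct xs" and ed: "\<And>i. i < n \<Longrightarrow> {xs ! i, xs ! ((i + 1) mod n)} \<in> T"
    using cyc unfolding is_cycle_def n_def by auto
  have eq_idx: "\<And>i j. i < n \<Longrightarrow> j < n \<Longrightarrow> xs!i = xs!j \<longleftrightarrow> i = j"
    using dist n_def nth_eq_iff_index_eq by blast
  have step: "(xs!k, xs!(k+1)) \<in> R" if "1 \<le> k" "k+1 < n" for k
  proof -
    have e: "{xs!k, xs!(k+1)} \<in> T" using ed[of k] that by simp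
    have ne: "{xs!k, xs!(k+1)} \<noteq> {xs!0, xs!1}"
    proof
      assume "{xs!k, xs!(k+1)} = {xs!0, xs!1}"
      hence "xs!(k+1) = xs!0 \<or> xs!(k+1) = xs!1" by blast
      thus False using eq_idx[of "k+1" 0] eq_idx[of "k+1" 1] that by auto
    qed
    have "{xs!k, xs!(k+1)} \<subseteq> W" using TW e by blast
    thus ?thesis using e ne unfolding R_def adj_rel_def by simp
  qed
  have "\<forall>k. 1 \<le> k \<longrightarrow> k < n \<longrightarrow> (xs!1, xs!k) \<in> R\<^sup>*"
  proof
    fix k show "1 \<le> k \<longrightarrow> k < n \<longrightarrow> (xs!1, xs!k) \<in> R\<^sup>*"
    proof (induction k)
      case 0 then show ?case by simp
    next
      case (Suc k)
      show ?case
      proof (cases "k = 0")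
        case True then show ?thesis by simp
      next
        case False
        show ?thesis
        proof (intro impI)
          assume "1 \<le> Suc k" "Suc k < n"
          hence "(xs!1, xs!k) \<in> R\<^sup>*" using Suc.IH False by simp
          moreover have "(xs!k, xs!(k+1)) \<in> R" using step[of k] False \<open>Suc k < n\<close> by simp
          ultimately show "(xs!1, xs!Suc k) \<in> R\<^sup>*" by simp
        qed
      qed
    qed
  qed
  moreover have "1 \<le> n - 1" "n - 1 < n" using n3 by auto
  ultimately have p: "(xs!1, xs!(n-1)) \<in> R\<^sup>*" by blast
  have e: "{xs!(n-1), xs!0} \<in> T" using ed[of "n-1"] n3 by simp
  have ne: "{xs!(n-1), xs!0} \<noteq> {xs!0, xs!1}"
  proof
    assume "{xs!(n-1), xs!0} = {xs!0, xs!1}"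
    hence "xs!(n-1) = xs!0 \<or> xs!(n-1) = xs!1" by blast
    thus False using eq_idx[of "n-1" 0] eq_idx[of "n-1" 1] n3 by auto
  qed
  have "{xs!(n-1), xs!0} \<subseteq> W" using TW e by blast
  hence "(xs!(n-1), xs!0) \<in> R" using e ne unfolding R_def adj_rel_def by simp
  with p show ?thesis unfolding R_def by (meson rtrancl.rtrancl_into_rtrancl)
qed

lemma spanning_tree:
  assumes fin: "finite W" and H: "\<forall>e\<in>H. e \<subseteq> W" and conn: "connected_graph W H"
  shows "\<exists>T\<subseteq>H. connected_graph W T \<and> acyclic_graph T"
proof -
  have "H \<subseteq> Pow W" using H by blast
  hence finH: "finite H" using fin by (simp add: finite_subset)
  obtain T where T: "T \<subseteq> H \<and> connected_graph W T"
    and min: "\<forall>T'. T' \<subseteq> H \<and> connected_graph W T' \<longrightarrow> card T \<le> card T'"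
    using ex_has_least_nat[of "\<lambda>T. T \<subseteq> H \<and> connected_graph W T" H card] conn by blast
  have "acyclic_graph T"
  proof (rule ccontr)
    assume "\<not> acyclic_graph T"
    then obtain xs where cyc: "is_cycle T xs" unfolding acyclic_graph_def by blast
    define e0 where "e0 = {xs!0, xs!1}"
    have e0T: "e0 \<in> T"
    proof -
      have "length xs \<ge> 3" and allE: "\<forall>i < length xs. {xs ! i, xs ! ((i + 1) mod length xs)} \<in> T"
        using cyc unfolding is_cycle_def by auto
      hence "{xs ! 0, xs ! ((0 + 1) mod length xs)} \<in> T" 
      proof -
        have "0 < length xs" using \<open>length xs \<ge> 3\<close> by linarith
        thus ?thesis using allE by blast
      qed
      moreover have "(0 + 1) mod length xs = 1" using \<open>length xs \<ge> 3\<close> by simp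
      ultimately show ?thesis unfolding e0_def by simp
    qed
    have TW: "\<forall>e\<in>T. e \<subseteq> W" using T H by blast
    have p: "(xs!1, xs!0) \<in> (adj_rel (T - {e0}) \<inter> W\<times>W)\<^sup>*" using cycle_path[OF cyc TW] e0_def by simp
    have "connected_graph W (T - {e0})"
    proof (rule conn_transfer[OF _ conjunct2[OF T]])
      fix a b assume ab: "{a,b} \<in> T" "a \<in> W" "b \<in> W"
      show "(a, b) \<in> (adj_rel (T - {e0}) \<inter> W \<times> W)\<^sup>*"
      proof (cases "{a,b} = e0")
        case True
        have "{a,b} = {xs!0, xs!1}" using True by (simp only: e0_def)
        then have "(a = xs!0 \<and> b = xs!1) \<or> (a = xs!1 \<and> b = xs!0)"
          by (rule iffD1[OF doubleton_eq_iff])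
        moreover have q: "(xs!0, xs!1) \<in> (adj_rel (T - {e0}) \<inter> W\<times>W)\<^sup>*" by (rule rt_sym[OF p])
        ultimately show ?thesis
        proof (elim disjE conjE)
          assume "a = xs!0" "b = xs!1" thus ?thesis using q by simp
        next
          assume "a = xs!1" "b = xs!0" thus ?thesis using p by simp
        qed
      next
        case False
        then have "(a,b) \<in> adj_rel (T - {e0}) \<inter> W \<times> W" using ab by (simp add: adj_rel_def)
        then show ?thesis by (rule r_into_rtrancl)
      qed
    qed
    moreover have c: "card (T - {e0}) < card T"
      by (rule card_Diff1_less[OF finite_subset[OF conjunct1[OF T] finH] e0T])
    moreover have "T - {e0} \<subseteq> H" using T by blast
    ultimately have "card T \<le> card (T - {e0})" using min by blast
    with c show False by simp
  qed
  thus ?thesis using T by blast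
qed



lemma sat_sat_edge:
  "{Sat p i, Sat q j} \<in> ext_E V E \<Gamma> \<Longrightarrow> p \<noteq> q \<Longrightarrow> {p,q} \<in> E \<and> i \<in> \<Gamma> q \<and> j \<in> \<Gamma> p"
  by (auto simp: ext_E_def Psi_def doubleton_eq_iff insert_commute split: if_splits)

lemma nuc_sat_edge:
  "{Nuc m, Sat p i} \<in> ext_E V E \<Gamma> \<Longrightarrow> p = m \<or> ({p,m} \<in> E \<and> i \<in> \<Gamma> m)"
  by (auto simp: ext_E_def Psi_def doubleton_eq_iff insert_commute split: if_splits)

lemma sg_edge: "simple_graph V E \<Longrightarrow> {a,b} \<in> E \<Longrightarrow> a \<noteq> b \<and> a \<in> V \<and> b \<in> V"
  unfolding simple_graph_def by (metis doubleton_eq_iff)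

theorem lemma4:
  fixes V :: "'v set" and E :: "'v set set" and K :: nat and \<Gamma> :: "'v \<Rightarrow> nat set"
    and M :: "'v set" and NS :: "'v enode set" and TS :: "'v enode set set"
  assumes "simple_graph V E" and "connected_graph V E" and "card V \<ge> 2"
    and "K > 0"
    and "\<forall>u\<in>V. \<Gamma> u \<noteq> {} \<and> \<Gamma> u \<subseteq> {1..K}"
    and "M \<subseteq> V"
    and "satellite_bridge V E \<Gamma> M NS TS"
  shows "\<exists>NR TR F. subtree V E NR TR \<and> M \<subseteq> NR
           \<and> (\<forall>u\<in>dplus NR TR. hitting_set {1..K} (\<Gamma> ` nb TR u) (F u))
           \<and> (\<Sum>u\<in>dplus NR TR. card (F u)) \<le> card NS"
proof -
  note sg = assms(1)
  have sub: "subtree (ext_V V E \<Gamma>) (ext_E V E \<Gamma>) NS TS" and NSsat: "NS \<subseteq> satellites V E \<Gamma>"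
    and adjM: "\<forall>m\<in>M. \<exists>s\<in>NS. {Nuc m, s} \<in> ext_E V E \<Gamma>"
    using assms(7) unfolding satellite_bridge_def by auto
  have NSne: "NS \<noteq> {}" using sub unfolding subtree_def by blast
  have TSE: "TS \<subseteq> ext_E V E \<Gamma>" using sub unfolding subtree_def by blast
  have TSN: "\<forall>e\<in>TS. e \<subseteq> NS" using sub unfolding subtree_def by blast
  have "simple_graph NS TS" using sub unfolding subtree_def by blast
  hence finNS: "finite NS" unfolding simple_graph_def by blast
  have connNS: "connected_graph NS TS" using sub unfolding subtree_def by blast
  have satform: "\<exists>u i. x = Sat u i \<and> u \<in> V \<and> i \<in> sat_labels E \<Gamma> u" if "x \<in> NS" for x
  proof -
    have "x \<in> (\<Union>u\<in>V. Sat u ` sat_labels E \<Gamma> u)" using NSsat that unfolding satellites_def Psi_def by blast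
    thus ?thesis by blast
  qed
  define nucl :: "'v enode \<Rightarrow> 'v" where "nucl = (\<lambda>x. case x of Sat u i \<Rightarrow> u | Nuc u \<Rightarrow> u)"
  define U where "U = {u. \<exists>i. Sat u i \<in> NS}"
  define F where "F = (\<lambda>u. {i. Sat u i \<in> NS})"
  have UV: "U \<subseteq> V"
  proof
    fix u assume "u \<in> U"
    then obtain i where "Sat u i \<in> NS" unfolding U_def by blast
    then obtain u' i' where "Sat u i = Sat u' i'" "u' \<in> V" using satform by blast
    thus "u \<in> V" by simp
  qed
  have "U \<subseteq> nucl ` NS"
  proof
    fix u assume "u \<in> U"
    then obtain i where i: "Sat u i \<in> NS" unfolding U_def by blast
    have "nucl (Sat u i) = u" unfolding nucl_def by simp
    thus "u \<in> nucl ` NS" using i by (metis imageI)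
  qed
  hence finU: "finite U" using finNS finite_surj by blast
  have Une: "U \<noteq> {}"
  proof -
    obtain x where "x \<in> NS" using NSne by blast
    then obtain u i where "x = Sat u i" using satform by blast
    thus ?thesis unfolding U_def using \<open>x \<in> NS\<close> by blast
  qed
  have finV: "finite V" using sg unfolding simple_graph_def by simp
  define P where "P = {{a,b} | a b. {a,b} \<in> E \<and> (\<exists>i. Sat a i \<in> NS \<and> i \<in> \<Gamma> b) \<and> (\<exists>j. Sat b j \<in> NS \<and> j \<in> \<Gamma> a)}"
  define g where "g = (\<lambda>m. SOME p. {p,m} \<in> E \<and> (\<exists>i. Sat p i \<in> NS \<and> i \<in> \<Gamma> m))"
  have gprop: "{g m, m} \<in> E \<and> (\<exists>i. Sat (g m) i \<in> NS \<and> i \<in> \<Gamma> m)" if mMU: "m \<in> M - U" for m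
  proof -
    obtain s where s: "s \<in> NS" "{Nuc m, s} \<in> ext_E V E \<Gamma>" using adjM mMU by blast
    from satform[OF s(1)] obtain p i where pi: "s = Sat p i" by (elim exE conjE)
    have "{Nuc m, Sat p i} \<in> ext_E V E \<Gamma>" using s(2) pi by simp
    hence "p = m \<or> ({p,m} \<in> E \<and> i \<in> \<Gamma> m)" by (rule nuc_sat_edge)
    moreover have "p \<noteq> m" using mMU s(1) pi unfolding U_def by blast
    ultimately have "{p,m} \<in> E \<and> (\<exists>i. Sat p i \<in> NS \<and> i \<in> \<Gamma> m)" using s(1) pi by blast
    thus ?thesis unfolding g_def by (rule someI)
  qed
  have gU: "g m \<in> U" if "m \<in> M - U" for m using gprop[OF that] unfolding U_def by blast
  define A where "A = {{m, g m} | m. m \<in> M - U}"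
  define H where "H = P \<union> A"
  define W where "W = U \<union> M"
  have finW: "finite W" unfolding W_def using finU finite_subset[OF assms(6) finV] by blast
  have WV: "W \<subseteq> V" unfolding W_def using UV assms(6) by blast
  have PU: "a \<in> U \<and> b \<in> U" if "{a,b} \<in> P" for a b
  proof -
    have "\<exists>x y. {a,b} = {x,y} \<and> {x,y} \<in> E \<and> (\<exists>i. Sat x i \<in> NS \<and> i \<in> \<Gamma> y) \<and> (\<exists>j. Sat y j \<in> NS \<and> j \<in> \<Gamma> x)"
      using that unfolding P_def by (simp only: mem_Collect_eq)
    then obtain x y where xy: "{a,b} = {x,y}" "\<exists>i. Sat x i \<in> NS" "\<exists>j. Sat y j \<in> NS"
      by (elim exE conjE) blast
    hence "x \<in> U" "y \<in> U" unfolding U_def by auto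
    moreover have "a \<in> {x,y}" "b \<in> {x,y}" using xy(1) by (metis insertI1 insert_commute)+
    ultimately show ?thesis by blast
  qed
  have HW: "\<forall>e\<in>H. e \<subseteq> W"
  proof
    fix e assume "e \<in> H"
    hence "e \<in> P \<or> e \<in> A" unfolding H_def by blast
    thus "e \<subseteq> W"
    proof
      assume eP: "e \<in> P"
      then obtain a b where "e = {a,b}" unfolding P_def by blast
      thus ?thesis using PU eP unfolding W_def by blast
    next
      assume "e \<in> A"
      then obtain m where "e = {m, g m}" "m \<in> M - U" unfolding A_def by blast
      thus ?thesis using gU unfolding W_def by blast
    qed
  qed
  have HE: "H \<subseteq> E"
  proof
    fix e assume "e \<in> H"
    hence "e \<in> P \<or> e \<in> A" unfolding H_def by blast
    thus "e \<in> E"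
    proof
      assume "e \<in> P"
      thus ?thesis unfolding P_def by blast
    next
      assume "e \<in> A"
      then obtain m where "e = {m, g m}" "m \<in> M - U" unfolding A_def by blast
      thus ?thesis using gprop by (simp add: insert_commute)
    qed
  qed
  define R where "R = adj_rel H \<inter> W \<times> W"
  have c1: "(nucl x, nucl y) \<in> R\<^sup>*" if "(x,y) \<in> (adj_rel TS \<inter> NS \<times> NS)\<^sup>*" for x y
    using that
  proof (induction rule: rtrancl_induct)
    case base then show ?case by simp
  next
    case (step y z)
    have yz: "{y,z} \<in> TS" "y \<in> NS" "z \<in> NS" using step(2) unfolding adj_rel_def by auto
    obtain p i where p: "y = Sat p i" using satform[OF yz(2)] by blast
    obtain q j where q: "z = Sat q j" using satform[OF yz(3)] by blast
    show ?case
    proof (cases "p = q")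
      case True then show ?thesis using step(3) p q unfolding nucl_def by simp
    next
      case False
      have "{Sat p i, Sat q j} \<in> ext_E V E \<Gamma>" using yz(1) TSE p q by blast
      hence "{p,q} \<in> E \<and> i \<in> \<Gamma> q \<and> j \<in> \<Gamma> p" by (rule sat_sat_edge[OF _ False])
      hence "{p,q} \<in> P" unfolding P_def using yz p q by blast
      moreover have "p \<in> W" "q \<in> W" using yz p q unfolding W_def U_def by auto
      ultimately have "(p,q) \<in> R" unfolding R_def H_def adj_rel_def by blast
      thus ?thesis using step(3) p q unfolding nucl_def by simp
    qed
  qed
  have cU: "(u,v) \<in> R\<^sup>*" if uU: "u \<in> U" and vU: "v \<in> U" for u v
  proof -
    obtain i where i: "Sat u i \<in> NS" using uU unfolding U_def by blast
    obtain j where j: "Sat v j \<in> NS" using vU unfolding U_def by blast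
    from i j have "(Sat u i, Sat v j) \<in> (adj_rel TS \<inter> NS \<times> NS)\<^sup>*" using connNS unfolding connected_graph_def by blast
    from c1[OF this] show ?thesis unfolding nucl_def by simp
  qed
  obtain u0 where u0: "u0 \<in> U" using Une by blast
  have toU: "(u0, w) \<in> R\<^sup>* \<and> (w, u0) \<in> R\<^sup>*" if "w \<in> W" for w
  proof (cases "w \<in> U")
    case True then show ?thesis using cU[OF u0 True] cU[OF True u0] by blast
  next
    case False
    hence wm: "w \<in> M - U" using that unfolding W_def by blast
    have "{w, g w} \<in> H" unfolding H_def A_def using wm by blast
    moreover have "g w \<in> W" using gU[OF wm] unfolding W_def by blast
    ultimately have "(w, g w) \<in> R" "(g w, w) \<in> R" using that unfolding R_def adj_rel_def
      by (auto simp: insert_commute)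
    thus ?thesis using cU[OF u0 gU[OF wm]] cU[OF gU[OF wm] u0]
      by (meson rtrancl.rtrancl_into_rtrancl converse_rtrancl_into_rtrancl)
  qed
  have connH: "connected_graph W H"
    unfolding connected_graph_def
  proof (intro ballI)
    fix x y assume "x \<in> W" "y \<in> W"
    then have "(x,u0) \<in> R\<^sup>*" "(u0,y) \<in> R\<^sup>*" using toU by auto
    thus "(x, y) \<in> (adj_rel H \<inter> W \<times> W)\<^sup>*" unfolding R_def by (meson rtrancl_trans)
  qed
  obtain T where TH: "T \<subseteq> H" and connT: "connected_graph W T" and acT: "acyclic_graph T"
    using spanning_tree[OF finW HW connH] by blast
  have Wne: "W \<noteq> {}" using Une unfolding W_def by blast
  have "subtree V E W T"
    unfolding subtree_def simple_graph_def
  proof (intro conjI ballI)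
    show "W \<noteq> {}" by (rule Wne)
    show "W \<subseteq> V" by (rule WV)
    show "T \<subseteq> E" using TH HE by blast
    show "finite W" by (rule finW)
    show "connected_graph W T" by (rule connT)
    show "acyclic_graph T" by (rule acT)
    fix e assume e: "e \<in> T"
    show "e \<subseteq> W" using e TH HW by blast
    have "e \<in> E" using e TH HE by blast
    then obtain a b where "e = {a,b}" using sg unfolding simple_graph_def by blast
    moreover have "a \<noteq> b" using sg_edge[OF sg] \<open>e \<in> E\<close> calculation by blast
    moreover have "a \<in> W" "b \<in> W" using \<open>e \<subseteq> W\<close> calculation by auto
    ultimately show "\<exists>u v. e = {u, v} \<and> u \<in> W \<and> v \<in> W \<and> u \<noteq> v" by blast
  qed
  moreover have "M \<subseteq> W" unfolding W_def by blast
  moreover have dU: "u \<in> U" if "u \<in> dplus W T" for u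
  proof (rule ccontr)
    assume nu: "u \<notin> U"
    hence um: "u \<in> M - U" using that unfolding dplus_def W_def by blast
    have "nb T u \<subseteq> {g u}"
    proof
      fix v assume "v \<in> nb T u"
      hence v: "{u,v} \<in> H" "v \<noteq> u" using TH unfolding nb_def by auto
      show "v \<in> {g u}"
      proof (cases "{u,v} \<in> P")
        case True then show ?thesis using PU nu by blast
      next
        case False
        then have "{u,v} \<in> A" using v(1) unfolding H_def by blast
        then have "\<exists>m. {u,v} = {m, g m} \<and> m \<in> M - U" unfolding A_def by (simp only: mem_Collect_eq)
        then obtain m where m: "{u,v} = {m, g m}" "m \<in> M - U" by blast
        show ?thesis using m gU[OF m(2)] nu v(2) by (auto simp: doubleton_eq_iff)
      qed
    qed
    hence "card (nb T u) \<le> 1" using card_mono[of "{g u}"] by simp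
    thus False using that unfolding dplus_def by simp
  qed
  moreover have "\<forall>u\<in>dplus W T. hitting_set {1..K} (\<Gamma> ` nb T u) (F u)"
  proof
    fix u assume ud: "u \<in> dplus W T"
    have uU: "u \<in> U" using dU[OF ud] .
    have "F u \<subseteq> {1..K}"
    proof
      fix i assume "i \<in> F u"
      hence "Sat u i \<in> NS" unfolding F_def by simp
      then obtain u' i' where "Sat u i = Sat u' i'" "u' \<in> V" "i' \<in> sat_labels E \<Gamma> u'" using satform by blast
      hence "i \<in> sat_labels E \<Gamma> u" by simp
      then obtain v where "v \<in> nb E u" "i \<in> \<Gamma> v" unfolding sat_labels_def by blast
      hence "{u,v} \<in> E" "i \<in> \<Gamma> v" unfolding nb_def by auto
      hence "v \<in> V" using sg_edge[OF sg] by blast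
      thus "i \<in> {1..K}" using assms(5) \<open>i \<in> \<Gamma> v\<close> by blast
    qed
    moreover have "\<Gamma> v \<inter> F u \<noteq> {}" if "v \<in> nb T u" for v
    proof -
      have v: "{u,v} \<in> H" using that TH unfolding nb_def by auto
      show ?thesis
      proof (cases "{u,v} \<in> P")
        case True
        then have "\<exists>a b. {u,v} = {a,b} \<and> {a,b} \<in> E \<and> (\<exists>i. Sat a i \<in> NS \<and> i \<in> \<Gamma> b) \<and> (\<exists>j. Sat b j \<in> NS \<and> j \<in> \<Gamma> a)"
          unfolding P_def by (simp only: mem_Collect_eq)
        then obtain a b where ab: "{u,v} = {a,b}" "(\<exists>i. Sat a i \<in> NS \<and> i \<in> \<Gamma> b)" "(\<exists>j. Sat b j \<in> NS \<and> j \<in> \<Gamma> a)"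
          by (elim exE conjE) blast
        then have "(u = a \<and> v = b) \<or> (u = b \<and> v = a)" by (simp add: doubleton_eq_iff)
        then show ?thesis using ab unfolding F_def by blast
      next
        case False
        then have "{u,v} \<in> A" using v unfolding H_def by blast
        then have "\<exists>m. {u,v} = {m, g m} \<and> m \<in> M - U" unfolding A_def by (simp only: mem_Collect_eq)
        then obtain m where m: "{u,v} = {m, g m}" "m \<in> M - U" by blast
        then have "u = g m \<and> v = m" using uU by (auto simp: doubleton_eq_iff)
        then show ?thesis using gprop[OF m(2)] unfolding F_def by blast
      qed
    qed
    ultimately show "hitting_set {1..K} (\<Gamma> ` nb T u) (F u)" unfolding hitting_set_def by blast
  qed
  moreover have "(\<Sum>u\<in>dplus W T. card (F u)) \<le> card NS"
  proof -
    have finF: "finite (F u)" for u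
    proof -
      have "F u = Sat u -` NS" unfolding F_def by auto
      thus ?thesis using finite_vimageI[OF finNS, of "Sat u"] by (simp add: inj_def)
    qed
    have "dplus W T \<subseteq> W" unfolding dplus_def by blast
    hence "(\<Sum>u\<in>dplus W T. card (F u)) \<le> (\<Sum>u\<in>W. card (F u))"
      by (intro sum_mono2[OF finW]) auto
    also have "\<dots> = card (SIGMA u:W. F u)" using finW finF by simp
    also have "\<dots> \<le> card NS"
    proof (rule card_inj_on_le[OF _ _ finNS])
      show "inj_on (\<lambda>(u,i). Sat u i) (SIGMA u:W. F u)" by (auto simp: inj_on_def)
      show "(\<lambda>(u,i). Sat u i) ` (SIGMA u:W. F u) \<subseteq> NS" unfolding F_def by auto
    qed
    finally show ?thesis .
  qed
  ultimately show ?thesis by blast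
qed

end
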